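(* The Bell polynomials $B_n(q)=\sum_{k=0}^nS(n,k)q^k$, $n\ge 0$, form a $q$-log-convex sequence.
   Context: $S(n,k)$ is the Stirling number of the second kind (number of partitions of $\{1,\dots,n\}$ into $k$ blocks), $S(0,0)=1$. For real polynomials $f,g$ write $f\le_q g$ if $g-f$ has nonnegative coefficients; a sequence $\{P_n(q)\}_{n\ge0}$ is $q$-log-convex if $P_n(q)^2\le_q P_{n-1}(q)P_{n+1}(q)$ for all $n\ge 1$. *)

theory Defs
  imports "HOL-Combinatorics.Stirling" "HOL-Computational_Algebra.Polynomial"
begin

definition bell_poly :: "nat \<Rightarrow> real poly" where
  "bell_poly n = (\<Sum>k\<le>n. monom (real (Stirling n k)) k)"

definition q_le :: "real poly \<Rightarrow> real poly \<Rightarrow> bool" where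
  "q_le f g \<longleftrightarrow> (\<forall>i. coeff (g - f) i \<ge> 0)"

definition q_log_convex :: "(nat \<Rightarrow> real poly) \<Rightarrow> bool" where
  "q_log_convex P \<longleftrightarrow> (\<forall>n\<ge>1. q_le ((P n)^2) (P (n - 1) * P (n + 1)))"

end

theory Submission
  imports Defs
begin

definition DD :: "real poly \<Rightarrow> real poly" where
  "DD f = pCons 0 (f + pderiv f)"

lemma coeff_bell: "coeff (bell_poly n) k = real (Stirling n k)"
proof (cases "k \<le> n")
  case True
  then show ?thesis unfolding bell_poly_def coeff_sum coeff_monom
    by (simp add: sum.delta' )
next
  case False
  then show ?thesis unfolding bell_poly_def coeff_sum coeff_monom by auto
qed

lemma bell_Suc: "bell_poly (Suc n) = DD (bell_poly n)"
proof (rule poly_eqI)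
  fix k show "coeff (bell_poly (Suc n)) k = coeff (DD (bell_poly n)) k"
    by (cases k) (simp_all add: DD_def coeff_bell coeff_pCons coeff_pderiv algebra_simps)
qed

lemma DD_add: "DD (f + g) = DD f + DD g"
  by (simp add: DD_def pderiv_add algebra_simps)

lemma DD_smult: "DD (smult c f) = smult c (DD f)"
  by (simp add: DD_def pderiv_smult smult_add_right)

lemma DD_zero: "DD 0 = 0"
  by (simp add: DD_def)

lemma DD_sum: "DD (\<Sum>k\<in>A. f k) = (\<Sum>k\<in>A. DD (f k))"
  by (induction A rule: infinite_finite_induct) (simp_all add: DD_zero DD_add)

lemma DD_monom: "DD (monom c k) = monom c (Suc k) + monom (of_nat k * c) k"
  by (rule poly_eqI) (auto simp: DD_def coeff_pCons coeff_pderiv coeff_monom split: nat.splits)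

lemma bell_expand: "bell_poly n = (\<Sum>k\<le>n. smult (real (Stirling n k)) (monom 1 k))"
  unfolding bell_poly_def by (simp add: smult_monom)

lemma D1: "DD (monom 1 j) = monom 1 (Suc j) + monom (real j) j"
  by (simp add: DD_monom)

lemma D2: "DD (DD (monom 1 j)) = monom 1 (Suc (Suc j)) + monom (2 * real j + 1) (Suc j) + monom ((real j)^2) j"
proof -
  have "DD (DD (monom 1 j)) = DD (monom 1 (Suc j)) + DD (monom (real j) j)"
    by (simp only: D1 DD_add)
  also have "... = monom 1 (Suc (Suc j)) + monom (real (Suc j)) (Suc j) + (monom (real j) (Suc j) + monom (real j * real j) j)"
    by (simp only: DD_monom mult_1_right)
  also have "... = monom 1 (Suc (Suc j)) + (monom (real (Suc j)) (Suc j) + monom (real j) (Suc j)) + monom (real j * real j) j"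
    by (simp only: add.assoc)
  also have "... = monom 1 (Suc (Suc j)) + monom (2 * real j + 1) (Suc j) + monom ((real j)^2) j"
    by (simp only: add_monom) (simp add: power2_eq_square)
  finally show ?thesis .
qed

lemma key:
  fixes i j :: nat
  shows "coeff (monom 1 i * DD (DD (monom 1 j)) + monom 1 j * DD (DD (monom 1 i))
        - smult 2 (DD (monom 1 i) * DD (monom 1 j))) n
        = coeff (smult 2 (monom 1 (Suc (i + j))) + monom ((real i - real j)^2) (i + j)) n"
    unfolding D2 unfolding D1 distrib_left distrib_right mult_monom smult_add_right smult_monom
      coeff_add coeff_diff coeff_smult coeff_monom
    by (cases "n = i + j"; cases "n = Suc (i+j)"; cases "n = Suc (Suc (i+j))")
       (simp_all add: power2_eq_square algebra_simps)

lemma key_nonneg: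
  fixes i j :: nat
  shows "coeff (monom 1 i * DD (DD (monom 1 j)) + monom 1 j * DD (DD (monom 1 i))
        - smult 2 (DD (monom 1 i) * DD (monom 1 j))) n \<ge> 0"
  unfolding key by (simp add: coeff_monom)

lemma main_step:
  fixes p :: nat and m :: nat
  shows "coeff (bell_poly p * bell_poly (Suc (Suc p)) - (bell_poly (Suc p))^2) m \<ge> 0"
proof -
  define a where "a k = real (Stirling p k)" for k
  define e where "e k = (monom 1 k :: real poly)" for k
  define T where "T i j = e i * DD (DD (e j)) - DD (e i) * DD (e j)" for i j
  define c where "c i j = a i * a j * coeff (T i j) m" for i j
  have B0: "bell_poly p = (\<Sum>k\<le>p. smult (a k) (e k))"
    unfolding bell_expand a_def e_def ..
  have B1: "bell_poly (Suc p) = (\<Sum>k\<le>p. smult (a k) (DD (e k)))"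
    unfolding bell_Suc B0 DD_sum DD_smult ..
  have B2: "bell_poly (Suc (Suc p)) = (\<Sum>k\<le>p. smult (a k) (DD (DD (e k))))"
    unfolding bell_Suc B0 DD_sum DD_smult ..
  have P1: "bell_poly p * bell_poly (Suc (Suc p)) =
      (\<Sum>i\<le>p. \<Sum>j\<le>p. smult (a i * a j) (e i * DD (DD (e j))))"
    unfolding B0 B2 sum_product by (simp add: mult_smult_left mult_smult_right mult.commute)
  have P2: "(bell_poly (Suc p))^2 =
      (\<Sum>i\<le>p. \<Sum>j\<le>p. smult (a i * a j) (DD (e i) * DD (e j)))"
    unfolding B1 power2_eq_square sum_product by (simp add: mult_smult_left mult_smult_right mult.commute)
  have "coeff (bell_poly p * bell_poly (Suc (Suc p)) - (bell_poly (Suc p))^2) m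
      = (\<Sum>i\<le>p. \<Sum>j\<le>p. c i j)"
    unfolding P1 P2 c_def T_def coeff_diff coeff_sum coeff_smult
    by (simp add: sum_subtractf[symmetric] algebra_simps)
  also have "... = (1/2) * ((\<Sum>i\<le>p. \<Sum>j\<le>p. c i j) + (\<Sum>i\<le>p. \<Sum>j\<le>p. c j i))"
    using sum.swap[of c "{..p}" "{..p}"] by simp
  also have "... = (1/2) * (\<Sum>i\<le>p. \<Sum>j\<le>p. c i j + c j i)"
    by (simp add: sum.distrib)
  also have "... \<ge> 0"
  proof -
    have "c i j + c j i \<ge> 0" for i j
    proof -
      have "c i j + c j i = a i * a j * coeff (monom 1 i * DD (DD (monom 1 j)) + monom 1 j * DD (DD (monom 1 i))
        - smult 2 (DD (monom 1 i) * DD (monom 1 j))) m"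
        unfolding c_def T_def e_def coeff_diff coeff_add coeff_smult
        by (simp add: algebra_simps)
      also have "... \<ge> 0"
        using key_nonneg[of i j m] by (simp add: a_def)
      finally show ?thesis .
    qed
    then show ?thesis by (simp add: sum_nonneg)
  qed
  finally show ?thesis .
qed

theorem proposition4p4:
  shows "q_log_convex bell_poly"
  unfolding q_log_convex_def q_le_def
proof (intro allI impI)
  fix n i :: nat assume "n \<ge> 1"
  then obtain p where "n = Suc p" by (cases n) auto
  then show "0 \<le> coeff (bell_poly (n - 1) * bell_poly (n + 1) - (bell_poly n)\<^sup>2) i"
    using main_step[of p i] by simp
qed

end
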